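(* Let $G$ be a well-bicovered graph with adjacent vertices $u$ and $v$, and let $H$ be a bipartite graph (disjoint from $G$) with adjacent vertices $u'$ and $v'$. Let $F$ be the graph formed from the disjoint union of $G$ and $H$ by identifying $u$ with $u'$ and $v$ with $v'$. Then $F$ is well-bicovered.
   Context: All graphs are finite and simple; "subgraph" means induced subgraph. A graph is well-bicovered if every vertex-inclusion-maximal induced bipartite subgraph has the same order. *)

theory Defs
  imports Main
begin

definition simple_graph :: "'a set \<Rightarrow> ('a \<Rightarrow> 'a \<Rightarrow> bool) \<Rightarrow> bool" where
  "simple_graph V E \<longleftrightarrow> finite V \<and> (\<forall>x y. E x y \<longrightarrow> x \<in> V \<and> y \<in> V)
     \<and> (\<forall>x y. E x y \<longrightarrow> E y x) \<and> (\<forall>x. \<not> E x x)"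

definition induced_bipartite :: "('a \<Rightarrow> 'a \<Rightarrow> bool) \<Rightarrow> 'a set \<Rightarrow> bool" where
  "induced_bipartite E S \<longleftrightarrow> (\<exists>A. \<forall>x\<in>S. \<forall>y\<in>S. E x y \<longrightarrow> (x \<in> A \<longleftrightarrow> y \<notin> A))"

definition bipartite :: "'a set \<Rightarrow> ('a \<Rightarrow> 'a \<Rightarrow> bool) \<Rightarrow> bool" where
  "bipartite V E \<longleftrightarrow> induced_bipartite E V"

definition maximal_bipartite_set :: "'a set \<Rightarrow> ('a \<Rightarrow> 'a \<Rightarrow> bool) \<Rightarrow> 'a set \<Rightarrow> bool" where
  "maximal_bipartite_set V E S \<longleftrightarrow> S \<subseteq> V \<and> induced_bipartite E S \<and>
     (\<forall>T. T \<subseteq> V \<and> induced_bipartite E T \<and> S \<subseteq> T \<longrightarrow> T = S)"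

definition well_bicovered :: "'a set \<Rightarrow> ('a \<Rightarrow> 'a \<Rightarrow> bool) \<Rightarrow> bool" where
  "well_bicovered V E \<longleftrightarrow> (\<forall>S T. maximal_bipartite_set V E S \<and> maximal_bipartite_set V E T
     \<longrightarrow> card S = card T)"

text \<open>Gluing: vertices of G become Inl, vertices of H become Inr, except that
  u' is identified with u and v' with v.\<close>
definition glue_map :: "'a \<Rightarrow> 'a \<Rightarrow> 'b \<Rightarrow> 'b \<Rightarrow> 'b \<Rightarrow> 'a + 'b" where
  "glue_map u v u' v' y = (if y = u' then Inl u else if y = v' then Inl v else Inr y)"

definition glue_V :: "'a set \<Rightarrow> 'a \<Rightarrow> 'a \<Rightarrow> 'b set \<Rightarrow> 'b \<Rightarrow> 'b \<Rightarrow> ('a + 'b) set" where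
  "glue_V VG u v VH u' v' = Inl ` VG \<union> glue_map u v u' v' ` VH"

definition glue_E :: "('a \<Rightarrow> 'a \<Rightarrow> bool) \<Rightarrow> 'a \<Rightarrow> 'a \<Rightarrow> ('b \<Rightarrow> 'b \<Rightarrow> bool) \<Rightarrow> 'b \<Rightarrow> 'b
    \<Rightarrow> ('a + 'b) \<Rightarrow> ('a + 'b) \<Rightarrow> bool" where
  "glue_E EG u v EH u' v' x y \<longleftrightarrow>
     (\<exists>a b. x = Inl a \<and> y = Inl b \<and> EG a b) \<or>
     (\<exists>a b. x = glue_map u v u' v' a \<and> y = glue_map u v u' v' b \<and> EH a b)"

end

theory Submission
  imports Defs
begin

lemma glue_map_Inl:
  assumes "u' \<noteq> v'"
  shows "glue_map u v u' v' a = Inl x \<longleftrightarrow> (a = u' \<and> x = u) \<or> (a = v' \<and> x = v)"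
  using assms by (auto simp: glue_map_def)

lemma glue_map_Inr:
  shows "glue_map u v u' v' a = Inr y \<longleftrightarrow> a = y \<and> a \<noteq> u' \<and> a \<noteq> v'"
  by (auto simp: glue_map_def)

lemma glue_V_eq:
  assumes "u \<in> VG" "v \<in> VG" "u' \<in> VH" "v' \<in> VH"
  shows "glue_V VG u v VH u' v' = Inl ` VG \<union> Inr ` {b\<in>VH. b \<noteq> u' \<and> b \<noteq> v'}"
  using assms unfolding glue_V_def glue_map_def by (auto simp: image_iff)

lemma extend_bip:
  assumes "EG u v" "EH u' v'" "u \<noteq> v" "u' \<noteq> v'"
    and BB: "\<forall>x\<in>VH. \<forall>y\<in>VH. EH x y \<longrightarrow> (x \<in> B \<longleftrightarrow> y \<notin> B)"
    and VHe: "\<forall>x y. EH x y \<longrightarrow> x \<in> VH \<and> y \<in> VH"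
    and bT: "induced_bipartite EG T"
  shows "induced_bipartite (glue_E EG u v EH u' v')
            (Inl ` T \<union> Inr ` {b\<in>VH. b \<noteq> u' \<and> b \<noteq> v'})"
proof -
  let ?S = "Inl ` T \<union> Inr ` {b\<in>VH. b \<noteq> u' \<and> b \<noteq> v'}"
  let ?g = "glue_map u v u' v'"
  obtain A where A: "\<forall>x\<in>T. \<forall>y\<in>T. EG x y \<longrightarrow> (x \<in> A \<longleftrightarrow> y \<notin> A)"
    using bT unfolding induced_bipartite_def by blast
  define p where "p = (if u \<in> T then (u' \<in> B \<longleftrightarrow> u \<in> A) else (v' \<in> B \<longleftrightarrow> v \<in> A))"
  define col where "col z = (case z of Inl x \<Rightarrow> x \<in> A | Inr y \<Rightarrow> (y \<in> B \<longleftrightarrow> p))" for z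
  have uv': "u' \<in> VH" "v' \<in> VH" using VHe assms(2) by auto
  have key: "col (?g a) = (a \<in> B \<longleftrightarrow> p)" if "a \<in> VH" "?g a \<in> ?S" for a
  proof (cases "a = u'")
    case True
    then have "u \<in> T" using that by (auto simp: glue_map_def)
    then show ?thesis using True by (auto simp: glue_map_def col_def p_def)
  next
    case F1: False
    show ?thesis
    proof (cases "a = v'")
      case True
      then have vT: "v \<in> T" using that F1 assms(4) by (auto simp: glue_map_def)
      show ?thesis
      proof (cases "u \<in> T")
        case True
        have "v \<in> A \<longleftrightarrow> u \<notin> A" using A True vT assms(1) by blast
        moreover have "v' \<in> B \<longleftrightarrow> u' \<notin> B" using BB uv' assms(2) by blast
        ultimately show ?thesis using True \<open>a = v'\<close> assms(4)
          by (auto simp: glue_map_def col_def p_def)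
      next
        case False
        then show ?thesis using \<open>a = v'\<close> assms(4)
          by (auto simp: glue_map_def col_def p_def)
      qed
    next
      case False
      then show ?thesis using F1 by (auto simp: glue_map_def col_def)
    qed
  qed
  show ?thesis unfolding induced_bipartite_def
  proof (rule exI[of _ "{z. col z}"], intro ballI impI)
    fix x y assume xS: "x \<in> ?S" and yS: "y \<in> ?S" and e: "glue_E EG u v EH u' v' x y"
    from e show "x \<in> {z. col z} \<longleftrightarrow> y \<notin> {z. col z}"
      unfolding glue_E_def
    proof (elim disjE exE conjE)
      fix a b assume "x = Inl a" "y = Inl b" "EG a b"
      then show ?thesis using xS yS A by (auto simp: col_def)
    next
      fix a b assume xa: "x = ?g a" and yb: "y = ?g b" and "EH a b"
      then have "a \<in> VH" "b \<in> VH" using VHe by auto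
      then have "col x = (a \<in> B \<longleftrightarrow> p)" "col y = (b \<in> B \<longleftrightarrow> p)"
        using key xa yb xS yS by auto
      moreover have "a \<in> B \<longleftrightarrow> b \<notin> B" using BB \<open>a \<in> VH\<close> \<open>b \<in> VH\<close> \<open>EH a b\<close> by blast
      ultimately show ?thesis by auto
    qed
  qed
qed

theorem mainTheorem10:
  fixes VG :: "'a set" and EG :: "'a \<Rightarrow> 'a \<Rightarrow> bool"
    and VH :: "'b set" and EH :: "'b \<Rightarrow> 'b \<Rightarrow> bool"
    and u v :: 'a and u' v' :: 'b
  assumes "simple_graph VG EG" and "well_bicovered VG EG" and "EG u v"
    and "simple_graph VH EH" and "bipartite VH EH" and "EH u' v'"
  shows "well_bicovered (glue_V VG u v VH u' v') (glue_E EG u v EH u' v')"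
proof -
  let ?HR = "{b\<in>VH. b \<noteq> u' \<and> b \<noteq> v'}"
  let ?F = "glue_E EG u v EH u' v'"
  have sg: "finite VG" "\<forall>x y. EG x y \<longrightarrow> x \<in> VG \<and> y \<in> VG" "\<forall>x. \<not> EG x x"
    using assms(1) unfolding simple_graph_def by auto
  have sh: "finite VH" "\<forall>x y. EH x y \<longrightarrow> x \<in> VH \<and> y \<in> VH" "\<forall>x. \<not> EH x x"
    using assms(4) unfolding simple_graph_def by auto
  have uv: "u \<in> VG" "v \<in> VG" "u \<noteq> v" using sg assms(3) by metis+
  have uv': "u' \<in> VH" "v' \<in> VH" "u' \<noteq> v'" using sh assms(6) by metis+
  obtain B where BB: "\<forall>x\<in>VH. \<forall>y\<in>VH. EH x y \<longrightarrow> (x \<in> B \<longleftrightarrow> y \<notin> B)"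
    using assms(5) unfolding bipartite_def induced_bipartite_def by blast
  have GV: "glue_V VG u v VH u' v' = Inl ` VG \<union> Inr ` ?HR"
    by (rule glue_V_eq) (use uv uv' in auto)
  have ext: "induced_bipartite ?F (Inl ` T \<union> Inr ` ?HR)" if "induced_bipartite EG T" for T
    using extend_bip[OF assms(3) assms(6) uv(3) uv'(3) BB sh(2) that] .
  have Fedge: "?F (Inl a) (Inl b)" if "EG a b" for a b
    using that unfolding glue_E_def by blast
  have main: "maximal_bipartite_set VG EG {a. Inl a \<in> S} \<and>
      card S = card {a. Inl a \<in> S} + card ?HR"
    if S: "maximal_bipartite_set (glue_V VG u v VH u' v') ?F S" for S
  proof -
    define SG where "SG = {a. Inl a \<in> S}"
    have Ssub: "S \<subseteq> Inl ` VG \<union> Inr ` ?HR" using S GV unfolding maximal_bipartite_set_def by auto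
    have SGsub: "SG \<subseteq> VG" using Ssub unfolding SG_def by auto
    have SGbip: "induced_bipartite EG SG"
    proof -
      obtain C where C: "\<forall>x\<in>S. \<forall>y\<in>S. ?F x y \<longrightarrow> (x \<in> C \<longleftrightarrow> y \<notin> C)"
        using S unfolding maximal_bipartite_set_def induced_bipartite_def by blast
      show ?thesis unfolding induced_bipartite_def
        by (rule exI[of _ "{a. Inl a \<in> C}"]) (use C Fedge in \<open>auto simp: SG_def\<close>)
    qed
    have Seq: "S = Inl ` SG \<union> Inr ` ?HR"
    proof -
      have "S \<subseteq> Inl ` SG \<union> Inr ` ?HR" using Ssub unfolding SG_def by auto
      moreover have "Inl ` SG \<union> Inr ` ?HR \<subseteq> glue_V VG u v VH u' v'" using GV SGsub by auto
      ultimately show ?thesis using S ext[OF SGbip] unfolding maximal_bipartite_set_def by blast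
    qed
    have maxG: "maximal_bipartite_set VG EG SG"
      unfolding maximal_bipartite_set_def
    proof (intro conjI allI impI SGsub SGbip)
      fix T assume T: "T \<subseteq> VG \<and> induced_bipartite EG T \<and> SG \<subseteq> T"
      have "Inl ` T \<union> Inr ` ?HR \<subseteq> glue_V VG u v VH u' v'" using GV T by auto
      moreover have "S \<subseteq> Inl ` T \<union> Inr ` ?HR" using Seq T by auto
      ultimately have "Inl ` T \<union> Inr ` ?HR = S"
        using S ext T unfolding maximal_bipartite_set_def by blast
      then have "T \<subseteq> SG" unfolding SG_def by auto
      then show "T = SG" using T by auto
    qed
    have fin: "finite SG" using SGsub sg(1) finite_subset by blast
    have "card S = card (Inl ` SG :: ('a+'b) set) + card (Inr ` ?HR :: ('a+'b) set)"
      proof -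
      have "finite (Inl ` SG :: ('a+'b) set)" "finite (Inr ` ?HR :: ('a+'b) set)"
        "(Inl ` SG :: ('a+'b) set) \<inter> Inr ` ?HR = {}" using fin sh(1) by auto
      then show ?thesis unfolding Seq by (rule card_Un_disjoint)
    qed
    also have "\<dots> = card SG + card ?HR"
      by (simp add: card_image inj_on_def)
    finally show ?thesis using maxG unfolding SG_def by simp
  qed
  show ?thesis unfolding well_bicovered_def
  proof (intro allI impI, elim conjE)
    fix S T assume "maximal_bipartite_set (glue_V VG u v VH u' v') ?F S"
      "maximal_bipartite_set (glue_V VG u v VH u' v') ?F T"
    with main have a: "maximal_bipartite_set VG EG {a. Inl a \<in> S}"
      "card S = card {a. Inl a \<in> S} + card ?HR"
      and b: "maximal_bipartite_set VG EG {a. Inl a \<in> T}"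
      "card T = card {a. Inl a \<in> T} + card ?HR" by blast+
    have "card {a. Inl a \<in> S} = card {a. Inl a \<in> T}"
      using assms(2) a(1) b(1) unfolding well_bicovered_def by blast
    then show "card S = card T" using a(2) b(2) by simp
  qed
qed

end
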